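(* Let $k$ be an algebraically closed field of characteristic zero. Let $Y=\operatorname{Spec} B$ and $T=\operatorname{Spec} R$ be irreducible affine varieties over $k$, let $f : Y\to T$ be a dominant morphism whose general fibers are irreducible and reduced, regard $R\subset B$ via $f^*$, and let $D$ be an $R$-trivial derivation of $B$ such that for each closed point $t\in T$ with maximal ideal $\mathfrak m$, the induced derivation $D\otimes_R R/\mathfrak m$ of $B\otimes_R R/\mathfrak m$ is locally nilpotent. Then there exist a subfield $k_0\subset k$ which is a finitely generated field extension of $\mathbb Q$, geometrically integral affine $k_0$-varieties $Y_0=\operatorname{Spec} B_0$ and $T_0=\operatorname{Spec} R_0$, a dominant morphism $f_0 : Y_0\to T_0$ and an $R_0$-trivial derivation $D_0$ of $B_0$ such that: (1) $Y_0,T_0,f_0,D_0$ are defined over $k_0$; (2) $Y=Y_0\otimes_{k_0}k$, $T=T_0\otimes_{k_0}k$, $f=f_0\otimes_{k_0}k$ and $D=D_0\otimes_{k_0}k$; (3) $D_0$ is locally nilpotent if and only if $D$ is locally nilpotent.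
   Context: A derivation $\delta$ of a ring $A$ is locally nilpotent if for every $a\in A$ some power $\delta^n(a)=0$. An $R$-trivial derivation of $B$ is a derivation vanishing on $R$. *)

theory Defs
  imports "HOL-Computational_Algebra.Polynomial"
begin

text \<open>All rings are realised as subsets of one ambient integral domain 'b,
which plays the role of the coordinate ring B of Y.\<close>

inductive_set ring_closure :: "'a::comm_ring_1 set \<Rightarrow> 'a set" for A where
  rc_base: "x \<in> A \<Longrightarrow> x \<in> ring_closure A"
| rc_one: "1 \<in> ring_closure A"
| rc_neg: "x \<in> ring_closure A \<Longrightarrow> - x \<in> ring_closure A"
| rc_add: "x \<in> ring_closure A \<Longrightarrow> y \<in> ring_closure A \<Longrightarrow> x + y \<in> ring_closure A"
| rc_mult: "x \<in> ring_closure A \<Longrightarrow> y \<in> ring_closure A \<Longrightarrow> x * y \<in> ring_closure A"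

text \<open>Smallest subset closed under ring operations and under taking inverses
(where they exist): for A inside a subfield this is the subfield generated by A
(over the prime field, which is Q in characteristic zero).\<close>
inductive_set field_closure :: "'a::comm_ring_1 set \<Rightarrow> 'a set" for A where
  fc_base: "x \<in> A \<Longrightarrow> x \<in> field_closure A"
| fc_one: "1 \<in> field_closure A"
| fc_neg: "x \<in> field_closure A \<Longrightarrow> - x \<in> field_closure A"
| fc_add: "x \<in> field_closure A \<Longrightarrow> y \<in> field_closure A \<Longrightarrow> x + y \<in> field_closure A"
| fc_mult: "x \<in> field_closure A \<Longrightarrow> y \<in> field_closure A \<Longrightarrow> x * y \<in> field_closure A"
| fc_inv: "x \<in> field_closure A \<Longrightarrow> x * y = 1 \<Longrightarrow> y \<in> field_closure A"

definition is_subring :: "'a::comm_ring_1 set \<Rightarrow> bool" where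
  "is_subring A \<longleftrightarrow> 1 \<in> A \<and> (\<forall>x\<in>A. \<forall>y\<in>A. x + y \<in> A \<and> x * y \<in> A \<and> - x \<in> A)"

definition is_subfield :: "'a::comm_ring_1 set \<Rightarrow> bool" where
  "is_subfield F \<longleftrightarrow> is_subring F \<and> (\<forall>x\<in>F. x \<noteq> 0 \<longrightarrow> (\<exists>y\<in>F. x * y = 1))"

definition alg_closed_subfield :: "'a::comm_ring_1 set \<Rightarrow> bool" where
  "alg_closed_subfield k \<longleftrightarrow> is_subfield k \<and>
     (\<forall>p :: 'a poly. (\<forall>i. coeff p i \<in> k) \<and> degree p \<ge> 1 \<longrightarrow> (\<exists>x\<in>k. poly p x = 0))"

definition fin_gen_algebra :: "'a::comm_ring_1 set \<Rightarrow> 'a set \<Rightarrow> bool" where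
  "fin_gen_algebra k A \<longleftrightarrow> (\<exists>S. finite S \<and> A = ring_closure (k \<union> S))"

definition fin_gen_field_over_Q :: "'a::comm_ring_1 set \<Rightarrow> bool" where
  "fin_gen_field_over_Q k0 \<longleftrightarrow> is_subfield k0 \<and> (\<exists>S. finite S \<and> k0 = field_closure S)"

definition is_derivation :: "('a::comm_ring_1 \<Rightarrow> 'a) \<Rightarrow> bool" where
  "is_derivation D \<longleftrightarrow> (\<forall>x y. D (x + y) = D x + D y \<and> D (x * y) = x * D y + D x * y)"

definition locally_nilpotent_on :: "'a::comm_ring_1 set \<Rightarrow> ('a \<Rightarrow> 'a) \<Rightarrow> bool" where
  "locally_nilpotent_on A D \<longleftrightarrow> (\<forall>a\<in>A. \<exists>n. (D ^^ n) a = 0)"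

definition ideal_of :: "'a::comm_ring_1 set \<Rightarrow> 'a set \<Rightarrow> bool" where
  "ideal_of R I \<longleftrightarrow> I \<subseteq> R \<and> 0 \<in> I \<and> (\<forall>x\<in>I. \<forall>y\<in>I. x + y \<in> I \<and> - x \<in> I)
      \<and> (\<forall>r\<in>R. \<forall>x\<in>I. r * x \<in> I)"

definition maximal_ideal_of :: "'a::comm_ring_1 set \<Rightarrow> 'a set \<Rightarrow> bool" where
  "maximal_ideal_of R m \<longleftrightarrow> ideal_of R m \<and> m \<noteq> R \<and>
     (\<forall>J. ideal_of R J \<and> m \<subseteq> J \<longrightarrow> J = m \<or> J = R)"

inductive_set ext_ideal :: "'a::comm_ring_1 set \<Rightarrow> 'a set" for I where
  ei_zero: "0 \<in> ext_ideal I"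
| ei_gen: "a \<in> I \<Longrightarrow> b * a \<in> ext_ideal I"
| ei_add: "x \<in> ext_ideal I \<Longrightarrow> y \<in> ext_ideal I \<Longrightarrow> x + y \<in> ext_ideal I"

text \<open>The fiber ring B \<otimes>_R R/m = B/mB is an integral domain
(fiber irreducible and reduced).\<close>
definition fiber_integral :: "'a::comm_ring_1 set \<Rightarrow> bool" where
  "fiber_integral m \<longleftrightarrow> ext_ideal m \<noteq> UNIV \<and>
     (\<forall>x y. x * y \<in> ext_ideal m \<longrightarrow> x \<in> ext_ideal m \<or> y \<in> ext_ideal m)"

text \<open>The induced derivation on B/mB is locally nilpotent.\<close>
definition fiber_LND :: "('a::comm_ring_1 \<Rightarrow> 'a) \<Rightarrow> 'a set \<Rightarrow> bool" where
  "fiber_LND D m \<longleftrightarrow> (\<forall>b. \<exists>n. (D ^^ n) b \<in> ext_ideal m)"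

definition lin_indep_over :: "'a::comm_ring_1 set \<Rightarrow> 'a set \<Rightarrow> bool" where
  "lin_indep_over F S \<longleftrightarrow> (\<forall>c. (\<forall>s\<in>S. c s \<in> F) \<and> (\<Sum>s\<in>S. c s * s) = 0 \<longrightarrow> (\<forall>s\<in>S. c s = 0))"

definition lin_disjoint :: "'a::comm_ring_1 set \<Rightarrow> 'a set \<Rightarrow> 'a set \<Rightarrow> bool" where
  "lin_disjoint k0 A K \<longleftrightarrow>
     (\<forall>S. finite S \<and> S \<subseteq> A \<and> lin_indep_over k0 S \<longrightarrow> lin_indep_over K S)"

text \<open>C = A \<otimes>_{k0} k, realised inside the ambient ring: the multiplication map
A \<otimes>_{k0} k \<rightarrow> C is injective (linear disjointness) and surjective.\<close>
definition base_change :: "'a::comm_ring_1 set \<Rightarrow> 'a set \<Rightarrow> 'a set \<Rightarrow> 'a set \<Rightarrow> bool" where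
  "base_change k0 A k C \<longleftrightarrow> k0 \<subseteq> A \<and> k0 \<subseteq> k \<and> lin_disjoint k0 A k \<and> C = ring_closure (A \<union> k)"

end

theory Submission
  imports Defs
begin



inductive_set lspan :: "'a::comm_ring_1 set \<Rightarrow> 'a set \<Rightarrow> 'a set" for F X where
  ls_zero: "0 \<in> lspan F X"
| ls_smult: "c \<in> F \<Longrightarrow> x \<in> X \<Longrightarrow> c * x \<in> lspan F X"
| ls_add: "a \<in> lspan F X \<Longrightarrow> b \<in> lspan F X \<Longrightarrow> a + b \<in> lspan F X"

definition mclosed :: "'a::comm_ring_1 set \<Rightarrow> bool" where
  "mclosed F \<longleftrightarrow> (\<forall>x\<in>F. \<forall>y\<in>F. x * y \<in> F)"

lemma lspan_mono:
  assumes "F \<subseteq> F'" "X \<subseteq> X'" shows "lspan F X \<subseteq> lspan F' X'"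
proof
  fix x assume "x \<in> lspan F X"
  then show "x \<in> lspan F' X'"
  proof (induction rule: lspan.induct)
    case ls_zero then show ?case by (rule lspan.ls_zero)
  next
    case (ls_smult c x) then show ?case using assms by (blast intro: lspan.ls_smult)
  next
    case (ls_add a b) then show ?case by (intro lspan.ls_add)
  qed
qed

lemma lspan_scale:
  assumes "mclosed F" "c \<in> F" "x \<in> lspan F X"
  shows "c * x \<in> lspan F X"
  using assms(3)
proof (induction rule: lspan.induct)
  case ls_zero then show ?case by (simp add: lspan.ls_zero)
next
  case (ls_smult d x)
  have "c * d \<in> F" using assms ls_smult unfolding mclosed_def by blast
  then have "(c * d) * x \<in> lspan F X" using ls_smult by (intro lspan.ls_smult)
  then show ?case by (simp add: mult.assoc)
next
  case (ls_add a b) then show ?case by (simp add: distrib_left lspan.ls_add)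
qed

lemma lspan_trans:
  assumes "mclosed F" "X \<subseteq> lspan F Y"
  shows "lspan F X \<subseteq> lspan F Y"
proof
  fix x assume "x \<in> lspan F X"
  then show "x \<in> lspan F Y"
  proof (induction rule: lspan.induct)
    case ls_zero then show ?case by (rule lspan.ls_zero)
  next
    case (ls_smult c x) then show ?case using assms lspan_scale by blast
  next
    case (ls_add a b) then show ?case by (intro lspan.ls_add)
  qed
qed

lemma lspan_mult_left:
  assumes "x \<in> lspan F X"
  shows "y * x \<in> lspan F ((\<lambda>z. y * z) ` X)"
  using assms
proof (induction rule: lspan.induct)
  case ls_zero then show ?case by (simp add: lspan.ls_zero)
next
  case (ls_smult c x)
  have "c * (y * x) \<in> lspan F ((\<lambda>z. y * z) ` X)" using ls_smult by (intro lspan.ls_smult) auto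
  then show ?case by (simp add: ac_simps)
next
  case (ls_add a b) then show ?case by (simp add: distrib_left lspan.ls_add)
qed

lemma lspan_mult:
  assumes "mclosed F" "mclosed X" "x \<in> lspan F X" "y \<in> lspan F X"
  shows "x * y \<in> lspan F X"
  using assms(3)
proof (induction rule: lspan.induct)
  case ls_zero then show ?case by (simp add: lspan.ls_zero)
next
  case (ls_smult c x)
  have "x * y \<in> lspan F ((\<lambda>z. x * z) ` X)" by (rule lspan_mult_left[OF assms(4)])
  also have "\<dots> \<subseteq> lspan F X"
    by (rule lspan_mono) (use assms(2) ls_smult in \<open>auto simp: mclosed_def\<close>)
  finally have "c * (x * y) \<in> lspan F X" using lspan_scale assms(1) ls_smult by blast
  then show ?case by (simp add: mult.assoc)
next
  case (ls_add a b) then show ?case by (simp add: distrib_right lspan.ls_add)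
qed

lemma lspan_finite_coeffs:
  assumes "x \<in> lspan K X"
  shows "\<exists>C. finite C \<and> C \<subseteq> K \<and> x \<in> lspan C X"
  using assms
proof (induction rule: lspan.induct)
  case ls_zero
  have "(0::'a) \<in> lspan {} X" by (rule lspan.ls_zero)
  then show ?case by blast
next
  case (ls_smult c x)
  have "c * x \<in> lspan {c} X" using ls_smult by (intro lspan.ls_smult) auto
  then show ?case using ls_smult by (intro exI[of _ "{c}"]) simp
next
  case (ls_add a b)
  then obtain C1 C2 where h: "finite C1" "C1 \<subseteq> K" "a \<in> lspan C1 X" "finite C2" "C2 \<subseteq> K" "b \<in> lspan C2 X"
    by blast
  have "lspan C1 X \<subseteq> lspan (C1 \<union> C2) X" "lspan C2 X \<subseteq> lspan (C1 \<union> C2) X"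
    by (rule lspan_mono; simp)+
  then have "a + b \<in> lspan (C1 \<union> C2) X" using h by (intro lspan.ls_add) blast+
  then show ?case using h by (intro exI[of _ "C1 \<union> C2"]) simp
qed

lemma sum_restrict_sub:
  assumes "finite A" "B \<subseteq> A"
  shows "(\<Sum>t\<in>A. (if t \<in> B then f t else 0)) = (\<Sum>t\<in>B. f t)"
proof -
  have "(\<Sum>t\<in>A. (if t \<in> B then f t else 0)) = (\<Sum>t\<in>A \<inter> B. f t)"
    using assms(1) by (rule sum.inter_restrict[symmetric])
  also have "A \<inter> B = B" using assms(2) by blast
  finally show ?thesis .
qed

lemma lspan_repr:
  assumes "x \<in> lspan F X" "0 \<in> F" "\<forall>a\<in>F. \<forall>b\<in>F. a + b \<in> F"
  shows "\<exists>T a. finite T \<and> T \<subseteq> X \<and> (\<forall>t\<in>T. a t \<in> F) \<and> x = (\<Sum>t\<in>T. a t * t)"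
  using assms(1)
proof (induction rule: lspan.induct)
  case ls_zero
  have "finite {} \<and> {} \<subseteq> X \<and> (\<forall>t\<in>{}. (\<lambda>_. 0) t \<in> F) \<and> (0::'a) = (\<Sum>t\<in>{}. (\<lambda>_. 0) t * t)" by simp
  then show ?case by (intro exI[of _ "{}"] exI[of _ "\<lambda>_. 0"])
next
  case (ls_smult c x)
  then have "finite {x} \<and> {x} \<subseteq> X \<and> (\<forall>t\<in>{x}. (\<lambda>_. c) t \<in> F) \<and> c * x = (\<Sum>t\<in>{x}. (\<lambda>_. c) t * t)" by simp
  then show ?case by (intro exI[of _ "{x}"] exI[of _ "\<lambda>_. c"])
next
  case (ls_add a b)
  then obtain T1 a1 T2 a2 where h: "finite T1" "T1 \<subseteq> X" "\<forall>t\<in>T1. a1 t \<in> F" "a = (\<Sum>t\<in>T1. a1 t * t)"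
    "finite T2" "T2 \<subseteq> X" "\<forall>t\<in>T2. a2 t \<in> F" "b = (\<Sum>t\<in>T2. a2 t * t)" by blast
  define c where "c t = (if t \<in> T1 then a1 t else 0) + (if t \<in> T2 then a2 t else 0)" for t
  have fin: "finite (T1 \<union> T2)" using h by simp
  have "(\<Sum>t\<in>T1 \<union> T2. c t * t) = (\<Sum>t\<in>T1 \<union> T2. (if t \<in> T1 then a1 t * t else 0)) + (\<Sum>t\<in>T1 \<union> T2. (if t \<in> T2 then a2 t * t else 0))"
    unfolding c_def sum.distrib[symmetric] by (rule sum.cong) (auto simp: distrib_right)
  also have "\<dots> = a + b"
    using sum_restrict_sub[OF fin, of T1 "\<lambda>t. a1 t * t"] sum_restrict_sub[OF fin, of T2 "\<lambda>t. a2 t * t"] h(4,8)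
    by simp
  finally have e: "a + b = (\<Sum>t\<in>T1 \<union> T2. c t * t)" by simp
  have "\<forall>t\<in>T1 \<union> T2. c t \<in> F"
  proof
    fix t assume "t \<in> T1 \<union> T2"
    have "(if t \<in> T1 then a1 t else 0) \<in> F" "(if t \<in> T2 then a2 t else 0) \<in> F" using h assms(2) by auto
    then show "c t \<in> F" unfolding c_def using assms(3) by blast
  qed
  then have "finite (T1 \<union> T2) \<and> T1 \<union> T2 \<subseteq> X \<and> (\<forall>t\<in>T1 \<union> T2. c t \<in> F) \<and> a + b = (\<Sum>t\<in>T1 \<union> T2. c t * t)"
    using fin h e by simp
  then show ?case by (intro exI[of _ "T1 \<union> T2"] exI[of _ c])
qed




lemma LA:
  fixes a :: "'s \<Rightarrow> 't \<Rightarrow> 'a::idom"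
  assumes "finite S" "is_subfield F"
  shows "(\<forall>s\<in>S. \<forall>t\<in>Tt. a s t \<in> F) \<Longrightarrow> (\<forall>t\<in>Tt. (\<Sum>s\<in>S. c s * a s t) = 0) \<Longrightarrow> (\<exists>s\<in>S. c s \<noteq> 0)
    \<Longrightarrow> \<exists>c'. (\<forall>s\<in>S. c' s \<in> F) \<and> (\<exists>s\<in>S. c' s \<noteq> 0) \<and> (\<forall>t\<in>Tt. (\<Sum>s\<in>S. c' s * a s t) = 0)"
  using assms(1)
proof (induction S arbitrary: a c rule: finite_induct)
  case empty then show ?case by simp
next
  case (insert s0 S)
  have F1: "1 \<in> F" and Fadd: "\<And>x y. x \<in> F \<Longrightarrow> y \<in> F \<Longrightarrow> x + y \<in> F"
    and Fmul: "\<And>x y. x \<in> F \<Longrightarrow> y \<in> F \<Longrightarrow> x * y \<in> F"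
    and Fneg: "\<And>x. x \<in> F \<Longrightarrow> - x \<in> F"
    and Finv: "\<And>x. x \<in> F \<Longrightarrow> x \<noteq> 0 \<Longrightarrow> \<exists>y\<in>F. x * y = 1"
    using assms(2) unfolding is_subfield_def is_subring_def by auto
  have F0: "0 \<in> F" using Fadd[OF F1 Fneg[OF F1]] by simp
  show ?case
  proof (cases "\<forall>t\<in>Tt. a s0 t = 0")
    case True
    define c' where "c' s = (if s = s0 then 1 else (0::'a))" for s :: 's
    have "\<forall>s\<in>insert s0 S. c' s \<in> F" using F1 F0 unfolding c'_def by auto
    moreover have "c' s0 \<noteq> 0" unfolding c'_def by simp
    moreover have "\<forall>t\<in>Tt. (\<Sum>s\<in>insert s0 S. c' s * a s t) = 0"
    proof
      fix t assume "t \<in> Tt"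
      have "(\<Sum>s\<in>S. c' s * a s t) = 0" using insert.hyps(2) unfolding c'_def
        by (intro sum.neutral) auto
      then show "(\<Sum>s\<in>insert s0 S. c' s * a s t) = 0"
        using insert.hyps True \<open>t \<in> Tt\<close> by simp
    qed
    ultimately show ?thesis by (intro exI[of _ c']) auto
  next
    case False
    then obtain t0 where t0: "t0 \<in> Tt" "a s0 t0 \<noteq> 0" by blast
    define p where "p = a s0 t0"
    have pF: "p \<in> F" using insert.prems(1) t0 unfolding p_def by auto
    obtain q where qF: "q \<in> F" and pq: "p * q = 1" using Finv[OF pF] t0 unfolding p_def by blast
    have p0: "p \<noteq> 0" using t0 unfolding p_def by simp
    define a' where "a' s t = p * a s t - a s t0 * a s0 t" for s t
    have a'F: "\<forall>s\<in>S. \<forall>t\<in>Tt. a' s t \<in> F"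
    proof (intro ballI)
      fix s t assume "s \<in> S" "t \<in> Tt"
      then have "a s t \<in> F" "a s t0 \<in> F" "a s0 t \<in> F" using insert.prems(1) t0 by auto
      then show "a' s t \<in> F" unfolding a'_def diff_conv_add_uminus using Fmul Fadd Fneg pF by metis
    qed
    have sumsplit: "\<And>f t. (\<Sum>s\<in>insert s0 S. f s * a s t) = f s0 * a s0 t + (\<Sum>s\<in>S. f s * a s t)"
      using insert.hyps by simp
    have a'sum: "(\<Sum>s\<in>S. f s * a' s t) = p * (\<Sum>s\<in>S. f s * a s t) - a s0 t * (\<Sum>s\<in>S. f s * a s t0)" for f t
    proof -
      have "(\<Sum>s\<in>S. f s * a' s t) = (\<Sum>s\<in>S. p * (f s * a s t) - a s0 t * (f s * a s t0))"
        unfolding a'_def by (rule sum.cong) (simp_all add: right_diff_distrib mult.left_commute mult.assoc)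
      also have "\<dots> = p * (\<Sum>s\<in>S. f s * a s t) - a s0 t * (\<Sum>s\<in>S. f s * a s t0)"
        by (simp add: sum_subtractf sum_distrib_left)
      finally show ?thesis .
    qed
    show ?thesis
    proof (cases "\<exists>s\<in>S. c s \<noteq> 0")
      case True
      have "\<forall>t\<in>Tt. (\<Sum>s\<in>S. c s * a' s t) = 0"
      proof
        fix t assume t: "t \<in> Tt"
        have e1: "(\<Sum>s\<in>S. c s * a s t) = - (c s0 * a s0 t)"
          using insert.prems(2) t sumsplit[of c t] by (simp add: eq_neg_iff_add_eq_0 add.commute)
        have e2: "(\<Sum>s\<in>S. c s * a s t0) = - (c s0 * p)"
          using insert.prems(2) t0 sumsplit[of c t0] unfolding p_def by (simp add: eq_neg_iff_add_eq_0 add.commute)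
        show "(\<Sum>s\<in>S. c s * a' s t) = 0" unfolding a'sum e1 e2 by (simp add: algebra_simps)
      qed
      from insert.IH[OF a'F this True] obtain c'' where
        c'': "\<forall>s\<in>S. c'' s \<in> F" "\<exists>s\<in>S. c'' s \<noteq> 0" "\<forall>t\<in>Tt. (\<Sum>s\<in>S. c'' s * a' s t) = 0" by (elim exE conjE) (rule that)
      define c' where "c' = c''(s0 := - (q * (\<Sum>s\<in>S. c'' s * a s t0)))"
      have cS: "\<And>f. (\<Sum>s\<in>S. c' s * f s) = (\<Sum>s\<in>S. c'' s * f s)"
        using insert.hyps(2) unfolding c'_def by (intro sum.cong) auto
      have sumF: "(\<Sum>s\<in>S. c'' s * a s t0) \<in> F"
        using c''(1) insert.prems(1) t0
      proof (induction S rule: infinite_finite_induct)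
        case (infinite A) then show ?case using F0 by simp
      next
        case empty then show ?case using F0 by simp
      next
        case (insert x A) then show ?case using Fadd Fmul by simp
      qed
      have "\<forall>s\<in>insert s0 S. c' s \<in> F"
        using c''(1) insert.hyps(2) sumF qF Fmul Fneg unfolding c'_def by auto
      moreover have "\<exists>s\<in>insert s0 S. c' s \<noteq> 0"
        using c''(2) insert.hyps(2) unfolding c'_def by (metis fun_upd_apply insertCI)
      moreover have "\<forall>t\<in>Tt. (\<Sum>s\<in>insert s0 S. c' s * a s t) = 0"
      proof
        fix t assume t: "t \<in> Tt"
        let ?v = "(\<Sum>s\<in>insert s0 S. c' s * a s t)"
        have v: "?v = - (q * (\<Sum>s\<in>S. c'' s * a s t0)) * a s0 t + (\<Sum>s\<in>S. c'' s * a s t)"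
          unfolding sumsplit[of c' t] cS unfolding c'_def by simp
        have "p * ?v = - ((p * q) * (\<Sum>s\<in>S. c'' s * a s t0)) * a s0 t + p * (\<Sum>s\<in>S. c'' s * a s t)"
          unfolding v by (simp add: algebra_simps)
        also have "\<dots> = (\<Sum>s\<in>S. c'' s * a' s t)" unfolding pq a'sum by (simp add: algebra_simps)
        also have "\<dots> = 0" using c''(3) t by simp
        finally show "?v = 0" using p0 by simp
      qed
      ultimately show ?thesis by (intro exI[of _ c']) auto
    next
      case False
      then have cs0: "c s0 \<noteq> 0" using insert.prems(3) by auto
      have "(\<Sum>s\<in>S. c s * a s t0) = 0" using False by simp
      then have "c s0 * p = 0" using insert.prems(2) t0 sumsplit[of c t0] unfolding p_def by simp
      then show ?thesis using cs0 p0 by simp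
    qed
  qed
qed


lemma subring_zero: "is_subring K \<Longrightarrow> 0 \<in> K"
  unfolding is_subring_def by (metis add.right_inverse)

lemma subring_sum:
  assumes "is_subring K" "\<forall>s\<in>S. f s \<in> K"
  shows "sum f S \<in> K"
proof (cases "finite S")
  case True
  then show ?thesis using assms(2)
  proof (induction S rule: finite_induct)
    case empty then show ?case using subring_zero[OF assms(1)] by simp
  next
    case (insert x A) then show ?case using assms(1) unfolding is_subring_def by simp
  qed
next
  case False then show ?thesis using subring_zero[OF assms(1)] by simp
qed

lemma subfield_subring: "is_subfield F \<Longrightarrow> is_subring F"
  unfolding is_subfield_def by simp

lemma lin_disj_generic:
  fixes F K A X :: "'a::idom set"
  assumes F: "is_subfield F" and K: "is_subring K" and FK: "F \<subseteq> K"
    and A: "A \<subseteq> lspan F X" and indep: "\<forall>T. finite T \<and> T \<subseteq> X \<longrightarrow> lin_indep_over K T"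
  shows "lin_disjoint F A K"
  unfolding lin_disjoint_def
proof (intro allI impI)
  fix S assume S: "finite S \<and> S \<subseteq> A \<and> lin_indep_over F S"
  have F0: "0 \<in> F" using subring_zero[OF subfield_subring[OF F]] .
  have Fadd: "\<forall>a\<in>F. \<forall>b\<in>F. a + b \<in> F" using F unfolding is_subfield_def is_subring_def by blast
  show "lin_indep_over K S" unfolding lin_indep_over_def
  proof (intro allI impI ballI)
    fix c s0 assume c: "(\<forall>s\<in>S. c s \<in> K) \<and> (\<Sum>s\<in>S. c s * s) = 0" and s0: "s0 \<in> S"
    show "c s0 = 0"
    proof (rule ccontr)
      assume cs0: "c s0 \<noteq> 0"
      have "\<forall>s\<in>S. \<exists>T. \<exists>a. finite T \<and> T \<subseteq> X \<and> (\<forall>t\<in>T. a t \<in> F) \<and> s = (\<Sum>t\<in>T. a t * t)"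
      proof
        fix s assume "s \<in> S"
        then have "s \<in> lspan F X" using S A by blast
        then show "\<exists>T. \<exists>a. finite T \<and> T \<subseteq> X \<and> (\<forall>t\<in>T. a t \<in> F) \<and> s = (\<Sum>t\<in>T. a t * t)"
          using lspan_repr[OF _ F0 Fadd] by simp
      qed
      then obtain Ts where "\<forall>s\<in>S. \<exists>a. finite (Ts s) \<and> Ts s \<subseteq> X \<and> (\<forall>t\<in>Ts s. a t \<in> F) \<and> s = (\<Sum>t\<in>Ts s. a t * t)"
        by (rule bchoice[THEN exE])
      then obtain as where rep: "\<forall>s\<in>S. finite (Ts s) \<and> Ts s \<subseteq> X \<and> (\<forall>t\<in>Ts s. as s t \<in> F) \<and> s = (\<Sum>t\<in>Ts s. as s t * t)"
        by (rule bchoice[THEN exE])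
      define T where "T = (\<Union>s\<in>S. Ts s)"
      define a where "a s t = (if t \<in> Ts s then as s t else 0)" for s t
      have finT: "finite T" unfolding T_def using S rep by auto
      have TX: "T \<subseteq> X" unfolding T_def using rep by auto
      have aF: "\<forall>s\<in>S. \<forall>t\<in>T. a s t \<in> F" unfolding a_def using rep F0 by auto
      have srep: "s = (\<Sum>t\<in>T. a s t * t)" if "s \<in> S" for s
      proof -
        have sub: "Ts s \<subseteq> T" unfolding T_def using that by auto
        have "(\<Sum>t\<in>T. a s t * t) = (\<Sum>t\<in>T. (if t \<in> Ts s then as s t * t else 0))"
          unfolding a_def by (rule sum.cong) auto
        also have "\<dots> = (\<Sum>t\<in>Ts s. as s t * t)" by (rule sum_restrict_sub[OF finT sub])
        finally show ?thesis using rep that by simp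
      qed
      have swap: "(\<Sum>s\<in>S. f s * s) = (\<Sum>t\<in>T. (\<Sum>s\<in>S. f s * a s t) * t)" for f
      proof -
        have "(\<Sum>s\<in>S. f s * s) = (\<Sum>s\<in>S. f s * (\<Sum>t\<in>T. a s t * t))"
          using srep by (intro sum.cong) auto
        also have "\<dots> = (\<Sum>s\<in>S. \<Sum>t\<in>T. f s * a s t * t)"
          by (simp add: sum_distrib_left mult.assoc)
        also have "\<dots> = (\<Sum>t\<in>T. \<Sum>s\<in>S. f s * a s t * t)" by (rule sum.swap)
        also have "\<dots> = (\<Sum>t\<in>T. (\<Sum>s\<in>S. f s * a s t) * t)"
          by (simp add: sum_distrib_right)
        finally show ?thesis .
      qed
      have z: "(\<Sum>t\<in>T. (\<Sum>s\<in>S. c s * a s t) * t) = 0" using c swap[of c] by simp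
      have coefK: "\<forall>t\<in>T. (\<Sum>s\<in>S. c s * a s t) \<in> K"
      proof
        fix t assume "t \<in> T"
        then have "\<forall>s\<in>S. c s * a s t \<in> K" using c aF FK K unfolding is_subring_def by blast
        then show "(\<Sum>s\<in>S. c s * a s t) \<in> K" by (rule subring_sum[OF K])
      qed
      have "lin_indep_over K T" using indep finT TX by blast
      then have eqs: "\<forall>t\<in>T. (\<Sum>s\<in>S. c s * a s t) = 0"
        using coefK z unfolding lin_indep_over_def
        by (elim allE[of _ "\<lambda>t. (\<Sum>s\<in>S. c s * a s t)"]) simp
      have ex: "\<exists>s\<in>S. c s \<noteq> 0" using s0 cs0 by blast
      have fS: "finite S" using S by blast
      from LA[OF fS F aF eqs ex] obtain c' where
        c': "\<forall>s\<in>S. c' s \<in> F" "\<exists>s\<in>S. c' s \<noteq> 0" "\<forall>t\<in>T. (\<Sum>s\<in>S. c' s * a s t) = 0"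
        by (elim exE conjE) (rule that)
      have "(\<Sum>s\<in>S. c' s * s) = 0" unfolding swap using c'(3) by simp
      then have "\<forall>s\<in>S. c' s = 0" using S c'(1) unfolding lin_indep_over_def by blast
      then show False using c'(2) by blast
    qed
  qed
qed




definition mnm :: "'a::comm_ring_1 list \<Rightarrow> nat list \<Rightarrow> 'a" where
  "mnm G \<alpha> = prod_list (map2 (\<lambda>g e. g ^ e) G \<alpha>)"

definition vadd :: "nat list \<Rightarrow> nat list \<Rightarrow> nat list" where
  "vadd \<alpha> \<beta> = map2 (+) \<alpha> \<beta>"

lemma length_vadd[simp]: "length (vadd \<alpha> \<beta>) = min (length \<alpha>) (length \<beta>)"
  unfolding vadd_def by simp

lemma mono_vadd:
  "length \<alpha> = length G \<Longrightarrow> length \<beta> = length G \<Longrightarrow> mnm G (vadd \<alpha> \<beta>) = mnm G \<alpha> * mnm G \<beta>"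
proof (induction G arbitrary: \<alpha> \<beta>)
  case Nil then show ?case by (simp add: mnm_def vadd_def)
next
  case (Cons g G)
  then obtain a \<alpha>' b \<beta>' where "\<alpha> = a # \<alpha>'" "\<beta> = b # \<beta>'" by (cases \<alpha>; cases \<beta>) auto
  with Cons show ?case by (simp add: mnm_def vadd_def power_add ac_simps)
qed

lemma mono_zero: "mnm G (replicate (length G) 0) = 1"
  by (induction G) (simp_all add: mnm_def)

lemma gen_is_mono: "g \<in> set G \<Longrightarrow> \<exists>\<alpha>. length \<alpha> = length G \<and> mnm G \<alpha> = g"
proof (induction G)
  case Nil then show ?case by simp
next
  case (Cons h G)
  show ?case
  proof (cases "g = h")
    case True
    then have "length (1 # replicate (length G) 0) = length (h # G) \<and> mnm (h # G) (1 # replicate (length G) 0) = g"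
      using mono_zero[of G] by (simp add: mnm_def)
    then show ?thesis by (intro exI)
  next
    case False
    then obtain \<alpha> where "length \<alpha> = length G" "mnm G \<alpha> = g" using Cons by auto
    then have "length (0 # \<alpha>) = length (h # G) \<and> mnm (h # G) (0 # \<alpha>) = g" by (simp add: mnm_def)
    then show ?thesis by (intro exI)
  qed
qed

fun lexl :: "nat list \<Rightarrow> nat list \<Rightarrow> bool" where
  "lexl (a # as) (b # bs) = (a < b \<or> (a = b \<and> lexl as bs))"
| "lexl _ _ = False"

lemma lexl_irrefl: "\<not> lexl \<alpha> \<alpha>"
  by (induction \<alpha>) auto

lemma lexl_trans: "lexl \<alpha> \<beta> \<Longrightarrow> lexl \<beta> \<gamma> \<Longrightarrow> lexl \<alpha> \<gamma>"
proof (induction \<alpha> \<beta> arbitrary: \<gamma> rule: lexl.induct)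
  case (1 a as b bs)
  then obtain c cs where "\<gamma> = c # cs" by (cases \<gamma>) auto
  with 1 show ?case by auto
qed auto

lemma lexl_total: "length \<alpha> = length \<beta> \<Longrightarrow> \<alpha> \<noteq> \<beta> \<Longrightarrow> lexl \<alpha> \<beta> \<or> lexl \<beta> \<alpha>"
proof (induction \<alpha> arbitrary: \<beta>)
  case Nil then show ?case by simp
next
  case (Cons a as)
  then obtain b bs where "\<beta> = b # bs" by (cases \<beta>) auto
  with Cons show ?case by (cases "a = b") auto
qed

lemma lexl_vadd: "length \<alpha> = length \<gamma> \<Longrightarrow> length \<beta> = length \<gamma> \<Longrightarrow> lexl \<alpha> \<beta> \<Longrightarrow> lexl (vadd \<alpha> \<gamma>) (vadd \<beta> \<gamma>)"
proof (induction \<gamma> arbitrary: \<alpha> \<beta>)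
  case Nil then show ?case by (cases \<alpha>; cases \<beta>) (auto simp: vadd_def)
next
  case (Cons c cs)
  then obtain a as b bs where "\<alpha> = a # as" "\<beta> = b # bs" by (cases \<alpha>; cases \<beta>) auto
  with Cons show ?case by (auto simp: vadd_def)
qed

lemma sum_list_vadd: "length \<alpha> = length \<gamma> \<Longrightarrow> sum_list (vadd \<alpha> \<gamma>) = sum_list \<alpha> + sum_list \<gamma>"
proof (induction \<gamma> arbitrary: \<alpha>)
  case Nil then show ?case by (simp add: vadd_def)
next
  case (Cons c cs)
  then obtain a as where "\<alpha> = a # as" by (cases \<alpha>) auto
  with Cons show ?case by (simp add: vadd_def)
qed

definition mless :: "nat list \<Rightarrow> nat list \<Rightarrow> bool" where
  "mless \<alpha> \<beta> \<longleftrightarrow> length \<alpha> = length \<beta> \<and>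
     (sum_list \<alpha> < sum_list \<beta> \<or> (sum_list \<alpha> = sum_list \<beta> \<and> lexl \<alpha> \<beta>))"

lemma mless_irrefl: "\<not> mless \<alpha> \<alpha>"
  unfolding mless_def using lexl_irrefl by auto

lemma mless_trans: "mless \<alpha> \<beta> \<Longrightarrow> mless \<beta> \<gamma> \<Longrightarrow> mless \<alpha> \<gamma>"
  unfolding mless_def using lexl_trans by auto

lemma mless_total: "length \<alpha> = length \<beta> \<Longrightarrow> \<alpha> \<noteq> \<beta> \<Longrightarrow> mless \<alpha> \<beta> \<or> mless \<beta> \<alpha>"
  unfolding mless_def using lexl_total by (metis nat_neq_iff)

lemma mless_vadd: "mless \<beta> \<alpha> \<Longrightarrow> length \<gamma> = length \<alpha> \<Longrightarrow> mless (vadd \<beta> \<gamma>) (vadd \<alpha> \<gamma>)"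
  unfolding mless_def using lexl_vadd sum_list_vadd by auto

definition rank :: "nat list \<Rightarrow> nat" where
  "rank \<alpha> = card {\<beta>. mless \<beta> \<alpha>}"

lemma finite_mless: "finite {\<beta>. mless \<beta> \<alpha>}"
proof -
  have "{\<beta>. mless \<beta> \<alpha>} \<subseteq> {xs. set xs \<subseteq> {..sum_list \<alpha>} \<and> length xs = length \<alpha>}"
  proof
    fix \<beta> assume "\<beta> \<in> {\<beta>. mless \<beta> \<alpha>}"
    then have "length \<beta> = length \<alpha>" "sum_list \<beta> \<le> sum_list \<alpha>" unfolding mless_def by auto
    moreover have "\<forall>x\<in>set \<beta>. x \<le> sum_list \<beta>" using member_le_sum_list by blast
    ultimately show "\<beta> \<in> {xs. set xs \<subseteq> {..sum_list \<alpha>} \<and> length xs = length \<alpha>}" by auto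
  qed
  moreover have "finite {xs. set xs \<subseteq> {..sum_list \<alpha>} \<and> length xs = length \<alpha>}"
    by (rule finite_lists_length_eq) simp
  ultimately show ?thesis by (rule finite_subset)
qed

lemma mless_rank: "mless \<beta> \<alpha> \<Longrightarrow> rank \<beta> < rank \<alpha>"
  unfolding rank_def
proof (rule psubset_card_mono[OF finite_mless])
  assume h: "mless \<beta> \<alpha>"
  have "{\<gamma>. mless \<gamma> \<beta>} \<subseteq> {\<gamma>. mless \<gamma> \<alpha>}" using h mless_trans by blast
  moreover have "\<beta> \<in> {\<gamma>. mless \<gamma> \<alpha>}" "\<beta> \<notin> {\<gamma>. mless \<gamma> \<beta>}" using h mless_irrefl by auto
  ultimately show "{\<gamma>. mless \<gamma> \<beta>} \<subset> {\<gamma>. mless \<gamma> \<alpha>}" by blast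
qed

lemma mless_induct: "(\<And>\<alpha>. (\<And>\<beta>. mless \<beta> \<alpha> \<Longrightarrow> P \<beta>) \<Longrightarrow> P \<alpha>) \<Longrightarrow> P \<alpha>"
  by (induction \<alpha> rule: measure_induct_rule[of rank]) (use mless_rank in blast)

lemma le_pw_decomp:
  "list_all2 (\<le>) y \<delta> \<Longrightarrow> vadd y (map2 (-) \<delta> y) = \<delta> \<and> length (map2 (-) \<delta> y) = length y"
proof (induction y arbitrary: \<delta>)
  case Nil then show ?case by (simp add: vadd_def)
next
  case (Cons a as)
  then obtain b bs where "\<delta> = b # bs" by (cases \<delta>) auto
  with Cons show ?case by (auto simp: vadd_def)
qed

lemma dickson:
  "\<forall>x\<in>M. length x = n \<Longrightarrow> \<exists>B. finite B \<and> B \<subseteq> M \<and> (\<forall>x\<in>M. \<exists>y\<in>B. list_all2 (\<le>) y (x :: nat list))"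
proof (induction n arbitrary: M)
  case 0
  then have "M \<subseteq> {[]}" by auto
  then have "finite M" using finite_subset by blast
  then show ?case using 0 by (intro exI[of _ M]) auto
next
  case (Suc n)
  define M' where "M' = {v. \<exists>a. a # v \<in> M}"
  have "\<forall>x\<in>M'. length x = n" unfolding M'_def using Suc.prems by fastforce
  from Suc.IH[OF this] obtain B' where B': "finite B'" "B' \<subseteq> M'" "\<forall>x\<in>M'. \<exists>y\<in>B'. list_all2 (\<le>) y x"
    by (elim exE conjE) (rule that)
  have "\<forall>v\<in>B'. \<exists>a. a # v \<in> M" using B'(2) unfolding M'_def by blast
  then obtain f where f: "\<forall>v\<in>B'. f v # v \<in> M" by (rule bchoice[THEN exE])
  define A where "A = Max (insert 0 (f ` B'))"
  have fA: "\<forall>v\<in>B'. f v \<le> A" unfolding A_def using B'(1) by auto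
  have "\<forall>a. \<exists>Ba. finite Ba \<and> Ba \<subseteq> {v. a # v \<in> M} \<and> (\<forall>x\<in>{v. a # v \<in> M}. \<exists>y\<in>Ba. list_all2 (\<le>) y x)"
  proof
    fix a
    have "\<forall>x\<in>{v. a # v \<in> M}. length x = n" using Suc.prems by fastforce
    then show "\<exists>Ba. finite Ba \<and> Ba \<subseteq> {v. a # v \<in> M} \<and> (\<forall>x\<in>{v. a # v \<in> M}. \<exists>y\<in>Ba. list_all2 (\<le>) y x)"
      by (rule Suc.IH)
  qed
  then obtain Bs where Bs: "\<forall>a. finite (Bs a) \<and> Bs a \<subseteq> {v. a # v \<in> M} \<and> (\<forall>x\<in>{v. a # v \<in> M}. \<exists>y\<in>Bs a. list_all2 (\<le>) y x)"
    by (rule choice[THEN exE])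
  define B where "B = (\<lambda>v. f v # v) ` B' \<union> (\<Union>a<A. (\<lambda>v. a # v) ` Bs a)"
  have "finite B" unfolding B_def using B'(1) Bs by auto
  moreover have "B \<subseteq> M" unfolding B_def using f Bs by auto
  moreover have "\<forall>x\<in>M. \<exists>y\<in>B. list_all2 (\<le>) y x"
  proof
    fix x assume x: "x \<in> M"
    then obtain a v where av: "x = a # v" using Suc.prems by (cases x) auto
    show "\<exists>y\<in>B. list_all2 (\<le>) y x"
    proof (cases "A \<le> a")
      case True
      have "v \<in> M'" unfolding M'_def using x av by blast
      then obtain w where w: "w \<in> B'" "list_all2 (\<le>) w v" using B'(3) by blast
      then have "f w # w \<in> B" unfolding B_def by blast
      moreover have "list_all2 (\<le>) (f w # w) x" using w fA True av by auto
      ultimately show ?thesis by blast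
    next
      case False
      have "v \<in> {v. a # v \<in> M}" using x av by simp
      then obtain w where w: "w \<in> Bs a" "list_all2 (\<le>) w v" using Bs by blast
      then have "a # w \<in> B" unfolding B_def using False by auto
      moreover have "list_all2 (\<le>) (a # w) x" using w av by auto
      ultimately show ?thesis by blast
    qed
  qed
  ultimately show ?case by (intro exI[of _ B]) simp
qed

lemma lspan_sum:
  assumes "\<forall>t\<in>U. f t \<in> F \<and> t \<in> X"
  shows "(\<Sum>t\<in>U. f t * t) \<in> lspan F X"
proof (cases "finite U")
  case True
  then show ?thesis using assms
  proof (induction U rule: finite_induct)
    case empty then show ?case by (simp add: lspan.ls_zero)
  next
    case (insert x A) then show ?case by (simp add: lspan.ls_add lspan.ls_smult)
  qed
next
  case False then show ?thesis by (simp add: lspan.ls_zero)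
qed

lemma mono_in_rc: "mnm G \<alpha> \<in> ring_closure (set G)"
proof (induction G arbitrary: \<alpha>)
  case Nil then show ?case by (simp add: mnm_def rc_one)
next
  case (Cons g G)
  have pw: "g ^ e \<in> ring_closure (set (g # G))" for e
  proof (induction e)
    case 0 then show ?case by (simp add: rc_one)
  next
    case (Suc e)
    have "g \<in> ring_closure (set (g # G))" by (rule rc_base) simp
    then show ?case using Suc by (simp add: rc_mult)
  qed
  have mon: "ring_closure (set G) \<subseteq> ring_closure (set (g # G))"
  proof
    fix x assume "x \<in> ring_closure (set G)"
    then show "x \<in> ring_closure (set (g # G))"
    proof (induction rule: ring_closure.induct)
      case (rc_base x) then show ?case by (simp add: ring_closure.rc_base)
    qed (simp_all add: ring_closure.rc_one ring_closure.rc_neg ring_closure.rc_add ring_closure.rc_mult)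
  qed
  show ?case
  proof (cases \<alpha>)
    case Nil then show ?thesis by (simp add: mnm_def rc_one)
  next
    case (Cons e \<alpha>')
    have "mnm (g # G) \<alpha> = g ^ e * mnm G \<alpha>'" using Cons by (simp add: mnm_def)
    moreover have "mnm G \<alpha>' \<in> ring_closure (set (g # G))" using mon Cons.IH by blast
    ultimately show ?thesis using pw by (simp add: rc_mult)
  qed
qed




lemma rc_least:
  assumes "is_subring S" "A \<subseteq> S"
  shows "ring_closure A \<subseteq> S"
proof
  fix x assume "x \<in> ring_closure A"
  then show "x \<in> S"
  proof (induction rule: ring_closure.induct)
    case (rc_base x) then show ?case using assms(2) by blast
  next
    case rc_one then show ?case using assms(1) unfolding is_subring_def by blast
  next
    case (rc_neg x) then show ?case using assms(1) unfolding is_subring_def by blast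
  next
    case (rc_add x y) then show ?case using assms(1) unfolding is_subring_def by blast
  next
    case (rc_mult x y) then show ?case using assms(1) unfolding is_subring_def by blast
  qed
qed

lemma rc_subring: "is_subring (ring_closure A)"
  unfolding is_subring_def by (simp add: rc_one rc_neg rc_add rc_mult)

lemma rc_mono: "A \<subseteq> B \<Longrightarrow> ring_closure A \<subseteq> ring_closure B"
  by (rule rc_least[OF rc_subring]) (blast intro: rc_base)

lemma subring_mclosed: "is_subring F \<Longrightarrow> mclosed F"
  unfolding is_subring_def mclosed_def by blast

lemma mono_mclosed: "mclosed (mnm G ` {\<alpha>. length \<alpha> = length G})"
  unfolding mclosed_def
proof (intro ballI)
  fix x y assume "x \<in> mnm G ` {\<alpha>. length \<alpha> = length G}" "y \<in> mnm G ` {\<alpha>. length \<alpha> = length G}"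
  then obtain \<alpha> \<beta> where "length \<alpha> = length G" "length \<beta> = length G" "x = mnm G \<alpha>" "y = mnm G \<beta>" by blast
  then have "x * y = mnm G (vadd \<alpha> \<beta>)" "length (vadd \<alpha> \<beta>) = length G" by (simp_all add: mono_vadd)
  then show "x * y \<in> mnm G ` {\<alpha>. length \<alpha> = length G}" by blast
qed

lemma rc_span:
  fixes F :: "'a::comm_ring_1 set"
  assumes F: "is_subring F"
  shows "ring_closure (F \<union> set G) \<subseteq> lspan F (mnm G ` {\<alpha>. length \<alpha> = length G})"
proof
  let ?M = "mnm G ` {\<alpha>. length \<alpha> = length G}"
  have one: "1 \<in> ?M" using mono_zero[of G] by (metis (mono_tags, lifting) imageI length_replicate mem_Collect_eq)
  have F1: "1 \<in> F" and Fn: "- 1 \<in> F" using F unfolding is_subring_def by auto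
  fix x assume "x \<in> ring_closure (F \<union> set G)"
  then show "x \<in> lspan F ?M"
  proof (induction rule: ring_closure.induct)
    case (rc_base x)
    show ?case
    proof (cases "x \<in> F")
      case True
      have "x * 1 \<in> lspan F ?M" using True one by (rule ls_smult)
      then show ?thesis by simp
    next
      case False
      then have "x \<in> set G" using rc_base by blast
      then obtain \<alpha> where "length \<alpha> = length G" "mnm G \<alpha> = x" using gen_is_mono by blast
      then have "x \<in> ?M" by blast
      then have "1 * x \<in> lspan F ?M" using F1 by (intro ls_smult)
      then show ?thesis by simp
    qed
  next
    case rc_one
    have "1 * 1 \<in> lspan F ?M" using F1 one by (rule ls_smult)
    then show ?case by simp
  next
    case (rc_neg x)
    have "(- 1) * x \<in> lspan F ?M" by (rule lspan_scale[OF subring_mclosed[OF F] Fn rc_neg.IH])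
    then show ?case by simp
  next
    case (rc_add x y) show ?case using rc_add.IH by (rule ls_add)
  next
    case (rc_mult x y)
    show ?case by (rule lspan_mult[OF subring_mclosed[OF F] mono_mclosed rc_mult.IH])
  qed
qed

lemma span_in_rc:
  fixes F :: "'a::comm_ring_1 set"
  assumes "X \<subseteq> mnm G ` UNIV"
  shows "lspan F X \<subseteq> ring_closure (F \<union> set G)"
proof
  fix x assume "x \<in> lspan F X"
  then show "x \<in> ring_closure (F \<union> set G)"
  proof (induction rule: lspan.induct)
    case ls_zero
    have "1 + - 1 \<in> ring_closure (F \<union> set G)" by (intro rc_add rc_one rc_neg)
    then show ?case by simp
  next
    case (ls_smult c x)
    then obtain \<alpha> where "x = mnm G \<alpha>" using assms by blast
    then have "x \<in> ring_closure (F \<union> set G)" using mono_in_rc[of G \<alpha>] rc_mono[of "set G" "F \<union> set G"] by blast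
    moreover have "c \<in> ring_closure (F \<union> set G)" using ls_smult by (simp add: rc_base)
    ultimately show ?case by (simp add: rc_mult)
  next
    case (ls_add a b) then show ?case by (simp add: rc_add)
  qed
qed

lemmas mless_induct' = mless_induct[case_names less]

locale descent =
  fixes k :: "'a::idom set" and G :: "'a list"
  assumes k: "is_subfield k"
begin

definition std :: "nat list \<Rightarrow> bool" where
  "std \<alpha> \<longleftrightarrow> length \<alpha> = length G \<and> mnm G \<alpha> \<notin> lspan k (mnm G ` {\<beta>. mless \<beta> \<alpha>})"

definition Stdv :: "'a set" where
  "Stdv = mnm G ` {\<alpha>. std \<alpha>}"

lemma kc: "mclosed k" using k unfolding is_subfield_def by (simp add: subring_mclosed)
lemma k1: "1 \<in> k" using k unfolding is_subfield_def is_subring_def by simp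

lemma span_std:
  "length \<delta> = length G \<Longrightarrow> mnm G \<delta> \<in> lspan k (mnm G ` {\<beta>. std \<beta> \<and> (\<beta> = \<delta> \<or> mless \<beta> \<delta>)})"
proof (induction \<delta> rule: mless_induct')
  case (less \<delta>)
  show ?case
  proof (cases "std \<delta>")
    case True
    have "1 * mnm G \<delta> \<in> lspan k (mnm G ` {\<beta>. std \<beta> \<and> (\<beta> = \<delta> \<or> mless \<beta> \<delta>)})"
      by (rule ls_smult) (use k1 True in auto)
    then show ?thesis by simp
  next
    case False
    then have h: "mnm G \<delta> \<in> lspan k (mnm G ` {\<beta>. mless \<beta> \<delta>})" using less.prems unfolding std_def by simp
    have "mnm G ` {\<beta>. mless \<beta> \<delta>} \<subseteq> lspan k (mnm G ` {\<beta>. std \<beta> \<and> (\<beta> = \<delta> \<or> mless \<beta> \<delta>)})"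
    proof
      fix x assume "x \<in> mnm G ` {\<beta>. mless \<beta> \<delta>}"
      then obtain \<beta> where \<beta>: "mless \<beta> \<delta>" "x = mnm G \<beta>" by blast
      have "length \<beta> = length G" using \<beta> less.prems unfolding mless_def by simp
      then have "x \<in> lspan k (mnm G ` {\<beta>'. std \<beta>' \<and> (\<beta>' = \<beta> \<or> mless \<beta>' \<beta>)})" using less.IH[OF \<beta>(1)] \<beta> by simp
      also have "\<dots> \<subseteq> lspan k (mnm G ` {\<beta>. std \<beta> \<and> (\<beta> = \<delta> \<or> mless \<beta> \<delta>)})"
        by (rule lspan_mono) (use \<beta> mless_trans in auto)
      finally show "x \<in> lspan k (mnm G ` {\<beta>. std \<beta> \<and> (\<beta> = \<delta> \<or> mless \<beta> \<delta>)})" .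
    qed
    then show ?thesis using lspan_trans[OF kc] h by blast
  qed
qed

lemma mono_in_Stdv_span: "mnm G ` {\<alpha>. length \<alpha> = length G} \<subseteq> lspan k Stdv"
proof
  fix x assume "x \<in> mnm G ` {\<alpha>. length \<alpha> = length G}"
  then obtain \<delta> where "length \<delta> = length G" "x = mnm G \<delta>" by blast
  then have "x \<in> lspan k (mnm G ` {\<beta>. std \<beta> \<and> (\<beta> = \<delta> \<or> mless \<beta> \<delta>)})" using span_std by blast
  also have "\<dots> \<subseteq> lspan k Stdv" by (rule lspan_mono) (auto simp: Stdv_def)
  finally show "x \<in> lspan k Stdv" .
qed

end




context descent
begin

lemma Stdv_indep:
  assumes T: "finite T" "T \<subseteq> Stdv"
  shows "lin_indep_over k T"
proof -
  have "\<forall>t\<in>Stdv. \<exists>\<alpha>. std \<alpha> \<and> mnm G \<alpha> = t" unfolding Stdv_def by blast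
  then obtain e where e: "\<forall>t\<in>Stdv. std (e t) \<and> mnm G (e t) = t" by (rule bchoice[THEN exE])
  show ?thesis unfolding lin_indep_over_def
  proof (intro allI impI)
    fix c assume c: "(\<forall>s\<in>T. c s \<in> k) \<and> (\<Sum>s\<in>T. c s * s) = 0"
    show "\<forall>s\<in>T. c s = 0"
    proof (rule ccontr)
      assume nz: "\<not> (\<forall>s\<in>T. c s = 0)"
      define T' where "T' = {t\<in>T. c t \<noteq> 0}"
      have T'ne: "T' \<noteq> {}" using nz unfolding T'_def by blast
      have finT': "finite T'" using T(1) unfolding T'_def by simp
      have T'T: "T' \<subseteq> T" unfolding T'_def by blast
      define m where "m = Max ((\<lambda>t. rank (e t)) ` T')"
      have "m \<in> (\<lambda>t. rank (e t)) ` T'" unfolding m_def using finT' T'ne by (intro Max_in) simp_all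
      then obtain t1 where t1: "t1 \<in> T'" "rank (e t1) = m" by blast
      have ge: "rank (e t) \<le> m" if "t \<in> T'" for t unfolding m_def using finT' that by (intro Max_ge) simp_all
      have st1: "std (e t1)" "mnm G (e t1) = t1" using e t1(1) T'T T(2) by auto
      have less: "mless (e t) (e t1)" if t: "t \<in> T' - {t1}" for t
      proof -
        have st: "std (e t)" "mnm G (e t) = t" using e t T'T T(2) by auto
        then have "e t \<noteq> e t1" using t st1 by auto
        moreover have "length (e t) = length (e t1)" using st st1 unfolding std_def by simp
        ultimately have "mless (e t) (e t1) \<or> mless (e t1) (e t)" using mless_total by blast
        moreover have "\<not> mless (e t1) (e t)" using mless_rank[of "e t1" "e t"] ge[of t] t t1(2) by auto
        ultimately show ?thesis by blast
      qed
      have sum1: "(\<Sum>s\<in>T. c s * s) = (\<Sum>s\<in>T'. c s * s)"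
        by (rule sum.mono_neutral_right) (use T(1) in \<open>auto simp: T'_def\<close>)
      have sum2: "(\<Sum>s\<in>T'. c s * s) = c t1 * t1 + (\<Sum>s\<in>T'-{t1}. c s * s)"
        by (rule sum.remove[OF finT' t1(1)])
      have ct1: "c t1 \<in> k" "c t1 \<noteq> 0" using c t1(1) unfolding T'_def by auto
      then obtain d where d: "d \<in> k" "c t1 * d = 1" using k unfolding is_subfield_def by blast
      have eq: "c t1 * t1 = - (\<Sum>s\<in>T'-{t1}. c s * s)" using c sum1 sum2 by (simp add: eq_neg_iff_add_eq_0)
      have "t1 = d * (c t1 * t1)" using d(2) by (simp add: ac_simps)
      also have "\<dots> = (\<Sum>s\<in>T'-{t1}. (- (d * c s)) * s)"
        unfolding eq by (simp add: sum_distrib_left sum_negf[symmetric] ac_simps)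
      finally have t1eq: "t1 = (\<Sum>s\<in>T'-{t1}. (- (d * c s)) * s)" .
      have kneg: "\<And>x. x \<in> k \<Longrightarrow> - x \<in> k" using k unfolding is_subfield_def is_subring_def by blast
      have "(\<Sum>s\<in>T'-{t1}. (- (d * c s)) * s) \<in> lspan k (mnm G ` {\<beta>. mless \<beta> (e t1)})"
      proof (rule lspan_sum, intro ballI conjI)
        fix s assume s: "s \<in> T' - {t1}"
        have "c s \<in> k" using c s T'T by blast
        then show "- (d * c s) \<in> k" using kneg kc d(1) unfolding mclosed_def by blast
        have "mnm G (e s) = s" using e s T'T T(2) by auto
        then show "s \<in> mnm G ` {\<beta>. mless \<beta> (e t1)}" using less[OF s] by (metis (mono_tags, lifting) imageI mem_Collect_eq)
      qed
      then have "mnm G (e t1) \<in> lspan k (mnm G ` {\<beta>. mless \<beta> (e t1)})" using t1eq st1(2) by simp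
      then show False using st1(1) unfolding std_def by blast
    qed
  qed
qed

lemma reduction:
  "\<exists>C. finite C \<and> C \<subseteq> k \<and>
     (\<forall>F. mclosed F \<and> 1 \<in> F \<and> C \<subseteq> F \<longrightarrow> (\<forall>\<delta>. length \<delta> = length G \<longrightarrow> mnm G \<delta> \<in> lspan F Stdv))"
proof -
  define N where "N = {\<alpha>. length \<alpha> = length G \<and> \<not> std \<alpha>}"
  have "\<forall>x\<in>N. length x = length G" unfolding N_def by blast
  from dickson[OF this] obtain Bs where Bs: "finite Bs" "Bs \<subseteq> N" "\<forall>x\<in>N. \<exists>y\<in>Bs. list_all2 (\<le>) y x"
    by (elim exE conjE) (rule that)
  define P where "P \<alpha> = {\<beta>. std \<beta> \<and> mless \<beta> \<alpha>}" for \<alpha>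
  have "\<forall>\<alpha>\<in>Bs. \<exists>C\<alpha>. finite C\<alpha> \<and> C\<alpha> \<subseteq> k \<and> mnm G \<alpha> \<in> lspan C\<alpha> (mnm G ` P \<alpha>)"
  proof
    fix \<alpha> assume \<alpha>: "\<alpha> \<in> Bs"
    then have l: "length \<alpha> = length G" and ns: "\<not> std \<alpha>" using Bs(2) unfolding N_def by auto
    then have h: "mnm G \<alpha> \<in> lspan k (mnm G ` {\<beta>. mless \<beta> \<alpha>})" unfolding std_def by simp
    have "mnm G ` {\<beta>. mless \<beta> \<alpha>} \<subseteq> lspan k (mnm G ` P \<alpha>)"
    proof
      fix x assume "x \<in> mnm G ` {\<beta>. mless \<beta> \<alpha>}"
      then obtain \<beta> where \<beta>: "mless \<beta> \<alpha>" "x = mnm G \<beta>" by blast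
      have "length \<beta> = length G" using \<beta> l unfolding mless_def by simp
      then have "x \<in> lspan k (mnm G ` {\<beta>'. std \<beta>' \<and> (\<beta>' = \<beta> \<or> mless \<beta>' \<beta>)})" using span_std \<beta> by simp
      also have "\<dots> \<subseteq> lspan k (mnm G ` P \<alpha>)"
        by (rule lspan_mono) (use \<beta> mless_trans in \<open>auto simp: P_def\<close>)
      finally show "x \<in> lspan k (mnm G ` P \<alpha>)" .
    qed
    then have "mnm G \<alpha> \<in> lspan k (mnm G ` P \<alpha>)" using lspan_trans[OF kc] h by blast
    then show "\<exists>C\<alpha>. finite C\<alpha> \<and> C\<alpha> \<subseteq> k \<and> mnm G \<alpha> \<in> lspan C\<alpha> (mnm G ` P \<alpha>)"
      by (rule lspan_finite_coeffs)
  qed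
  then obtain Cf where Cf: "\<forall>\<alpha>\<in>Bs. finite (Cf \<alpha>) \<and> Cf \<alpha> \<subseteq> k \<and> mnm G \<alpha> \<in> lspan (Cf \<alpha>) (mnm G ` P \<alpha>)"
    by (rule bchoice[THEN exE])
  define C where "C = (\<Union>\<alpha>\<in>Bs. Cf \<alpha>)"
  have "finite C" unfolding C_def using Bs(1) Cf by blast
  moreover have "C \<subseteq> k" unfolding C_def using Cf by blast
  moreover have "\<forall>F. mclosed F \<and> 1 \<in> F \<and> C \<subseteq> F \<longrightarrow> (\<forall>\<delta>. length \<delta> = length G \<longrightarrow> mnm G \<delta> \<in> lspan F Stdv)"
  proof (intro allI impI)
    fix F and \<delta> :: "nat list" assume F: "mclosed F \<and> 1 \<in> F \<and> C \<subseteq> F" and "length \<delta> = length G"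
    then show "mnm G \<delta> \<in> lspan F Stdv"
    proof (induction \<delta> rule: mless_induct')
      case (less \<delta>)
      have F: "mclosed F" "1 \<in> F" "C \<subseteq> F" using F by auto
      show ?case
      proof (cases "std \<delta>")
        case True
        have "1 * mnm G \<delta> \<in> lspan F Stdv" by (rule ls_smult) (use F True in \<open>auto simp: Stdv_def\<close>)
        then show ?thesis by simp
      next
        case False
        then have "\<delta> \<in> N" using less.prems unfolding N_def by simp
        then obtain y where y: "y \<in> Bs" "list_all2 (\<le>) y \<delta>" using Bs(3) by blast
        define \<gamma> where "\<gamma> = map2 (-) \<delta> y"
        have dec: "vadd y \<gamma> = \<delta>" "length \<gamma> = length y" using le_pw_decomp[OF y(2)] unfolding \<gamma>_def by auto
        have ly: "length y = length G" using y(1) Bs(2) unfolding N_def by auto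
        have md: "mnm G \<delta> = mnm G \<gamma> * mnm G y"
          using mono_vadd[of y G \<gamma>] dec ly by (simp add: mult.commute)
        have "mnm G y \<in> lspan (Cf y) (mnm G ` P y)" using Cf y(1) by blast
        also have "\<dots> \<subseteq> lspan F (mnm G ` P y)" by (rule lspan_mono) (use C_def F y(1) in auto)
        finally have h1: "mnm G \<gamma> * mnm G y \<in> lspan F ((\<lambda>z. mnm G \<gamma> * z) ` mnm G ` P y)"
          by (rule lspan_mult_left)
        have "(\<lambda>z. mnm G \<gamma> * z) ` mnm G ` P y \<subseteq> lspan F Stdv"
        proof
          fix x assume "x \<in> (\<lambda>z. mnm G \<gamma> * z) ` mnm G ` P y"
          then obtain \<beta> where \<beta>: "std \<beta>" "mless \<beta> y" "x = mnm G \<gamma> * mnm G \<beta>" unfolding P_def by auto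
          have lb: "length \<beta> = length G" using \<beta>(1) unfolding std_def by simp
          have "x = mnm G (vadd \<beta> \<gamma>)" using mono_vadd[of \<beta> G \<gamma>] lb dec ly \<beta>(3) by (simp add: mult.commute)
          moreover have "mless (vadd \<beta> \<gamma>) \<delta>" using mless_vadd[OF \<beta>(2) dec(2)] dec(1) by simp
          moreover have "length (vadd \<beta> \<gamma>) = length G" using lb dec ly by simp
          moreover note F
          ultimately show "x \<in> lspan F Stdv" using less.IH[of "vadd \<beta> \<gamma>"] by simp
        qed
        then have "lspan F ((\<lambda>z. mnm G \<gamma> * z) ` mnm G ` P y) \<subseteq> lspan F Stdv" by (rule lspan_trans[OF F(1)])
        then show ?thesis using h1 md by (simp add: subset_iff)
      qed
    qed
  qed
  ultimately show ?thesis by blast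
qed

end




lemma fc_sub:
  fixes k :: "'a::idom set"
  assumes k: "is_subfield k" and X: "X \<subseteq> k"
  shows "field_closure X \<subseteq> k"
proof
  fix x assume "x \<in> field_closure X"
  then show "x \<in> k"
  proof (induction rule: field_closure.induct)
    case (fc_base x) then show ?case using X by blast
  next
    case fc_one then show ?case using k unfolding is_subfield_def is_subring_def by blast
  next
    case (fc_neg x) then show ?case using k unfolding is_subfield_def is_subring_def by blast
  next
    case (fc_add x y) then show ?case using k unfolding is_subfield_def is_subring_def by blast
  next
    case (fc_mult x y) then show ?case using k unfolding is_subfield_def is_subring_def by blast
  next
    case (fc_inv x y)
    have "x \<noteq> 0" using fc_inv.hyps(2) by auto
    then obtain z where z: "z \<in> k" "x * z = 1" using k fc_inv.IH unfolding is_subfield_def by blast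
    then have "x * y = x * z" using fc_inv.hyps(2) by simp
    then have "y = z" using \<open>x \<noteq> 0\<close> by simp
    then show ?case using z by simp
  qed
qed

lemma fc_subfield:
  fixes k :: "'a::idom set"
  assumes k: "is_subfield k" and X: "X \<subseteq> k"
  shows "is_subfield (field_closure X)"
  unfolding is_subfield_def is_subring_def
proof (intro conjI ballI impI)
  show "1 \<in> field_closure X" by (rule fc_one)
next
  fix x y assume "x \<in> field_closure X" "y \<in> field_closure X"
  then show "x + y \<in> field_closure X" "x * y \<in> field_closure X" "- x \<in> field_closure X"
    by (simp_all add: fc_add fc_mult fc_neg)
next
  fix x assume x: "x \<in> field_closure X" "x \<noteq> 0"
  then have "x \<in> k" using fc_sub[OF k X] by blast
  then obtain y where "y \<in> k" "x * y = 1" using k x(2) unfolding is_subfield_def by blast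
  then show "\<exists>y\<in>field_closure X. x * y = 1" using fc_inv[OF x(1)] by blast
qed

lemma der_zero: "is_derivation D \<Longrightarrow> D 0 = 0"
  unfolding is_derivation_def by (metis add_cancel_left_left add_0)

lemma der_one: "is_derivation D \<Longrightarrow> D 1 = 0"
proof -
  assume d: "is_derivation D"
  then have "D (1 * 1) = 1 * D 1 + D 1 * 1" unfolding is_derivation_def by blast
  then show "D 1 = 0" by simp
qed

lemma der_neg: "is_derivation D \<Longrightarrow> D (- x) = - D x"
proof -
  assume d: "is_derivation D"
  then have "D (x + - x) = D x + D (- x)" unfolding is_derivation_def by blast
  then have "D x + D (- x) = 0" using der_zero[OF d] by simp
  then show ?thesis by (simp add: eq_neg_iff_add_eq_0 add.commute)
qed

lemma funpow_der_zero: "is_derivation D \<Longrightarrow> (D ^^ n) 0 = 0"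
  by (induction n) (simp_all add: der_zero)

lemma funpow_der_add: "is_derivation D \<Longrightarrow> (D ^^ n) (x + y) = (D ^^ n) x + (D ^^ n) y"
  by (induction n) (simp_all add: is_derivation_def)

lemma funpow_der_neg: "is_derivation D \<Longrightarrow> (D ^^ n) (- x) = - (D ^^ n) x"
  by (induction n) (simp_all add: der_neg)

lemma funpow_later: "is_derivation D \<Longrightarrow> (D ^^ n) x = 0 \<Longrightarrow> n \<le> m \<Longrightarrow> (D ^^ m) x = 0"
proof -
  assume d: "is_derivation D" and h: "(D ^^ n) x = 0" and nm: "n \<le> m"
  then obtain j where "m = j + n" by (metis add.commute le_add_diff_inverse)
  then have "(D ^^ m) x = (D ^^ j) ((D ^^ n) x)" by (simp add: funpow_add)
  then show ?thesis using h funpow_der_zero[OF d] by simp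
qed

lemma funpow_der_mult:
  assumes d: "is_derivation D"
  shows "\<forall>n m x y. n + m = N \<longrightarrow> (D ^^ n) x = 0 \<longrightarrow> (D ^^ m) y = 0 \<longrightarrow> (D ^^ N) (x * y) = 0"
proof (induction N)
  case 0
  then show ?case by simp
next
  case (Suc N)
  show ?case
  proof (intro allI impI)
    fix n m x y assume nm: "n + m = Suc N" and hx: "(D ^^ n) x = 0" and hy: "(D ^^ m) y = 0"
    show "(D ^^ Suc N) (x * y) = 0"
    proof (cases "n = 0 \<or> m = 0")
      case True
      then have "x * y = 0" using hx hy by auto
      then show ?thesis using funpow_der_zero[OF d, of "Suc N"] by (simp del: funpow.simps)
    next
      case False
      then obtain n' m' where n': "n = Suc n'" and m': "m = Suc m'" by (metis not0_implies_Suc)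
      have e: "(D ^^ Suc N) (x * y) = (D ^^ N) (x * D y) + (D ^^ N) (D x * y)"
        using d unfolding is_derivation_def by (simp add: funpow_Suc_right funpow_der_add[OF d] del: funpow.simps)
      have "(D ^^ m') (D y) = 0" using hy m' by (simp add: funpow_Suc_right del: funpow.simps)
      moreover have "n + m' = N" using nm m' by simp
      ultimately have a: "(D ^^ N) (x * D y) = 0" using Suc.IH hx by blast
      have "(D ^^ n') (D x) = 0" using hx n' by (simp add: funpow_Suc_right del: funpow.simps)
      moreover have "n' + m = N" using nm n' by simp
      ultimately have b: "(D ^^ N) (D x * y) = 0" using Suc.IH hy by blast
      show ?thesis using e a b by simp
    qed
  qed
qed

lemma lnd_extend:
  assumes d: "is_derivation D" and kz: "\<forall>x\<in>K. D x = 0" and B0: "locally_nilpotent_on B0 D"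
  shows "locally_nilpotent_on (ring_closure (B0 \<union> K)) D"
  unfolding locally_nilpotent_on_def
proof
  fix a assume "a \<in> ring_closure (B0 \<union> K)"
  then show "\<exists>n. (D ^^ n) a = 0"
  proof (induction rule: ring_closure.induct)
    case (rc_base x)
    show ?case
    proof (cases "x \<in> B0")
      case True then show ?thesis using B0 unfolding locally_nilpotent_on_def by blast
    next
      case False
      then have "D x = 0" using rc_base kz by blast
      then have "(D ^^ 1) x = 0" by simp
      then show ?thesis by blast
    qed
  next
    case rc_one
    have "(D ^^ 1) 1 = 0" using der_one[OF d] by simp
    then show ?case by blast
  next
    case (rc_neg x)
    then obtain n where "(D ^^ n) x = 0" by blast
    then have "(D ^^ n) (- x) = 0" by (simp add: funpow_der_neg[OF d])
    then show ?case by blast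
  next
    case (rc_add x y)
    then obtain n m where "(D ^^ n) x = 0" "(D ^^ m) y = 0" by blast
    then have "(D ^^ (n + m)) x = 0" "(D ^^ (n + m)) y = 0" using funpow_later[OF d] by auto
    then have "(D ^^ (n + m)) (x + y) = 0" by (simp add: funpow_der_add[OF d])
    then show ?case by blast
  next
    case (rc_mult x y)
    then obtain n m where "(D ^^ n) x = 0" "(D ^^ m) y = 0" by blast
    then have "(D ^^ (n + m)) (x * y) = 0" using funpow_der_mult[OF d] by blast
    then show ?case by blast
  qed
qed




theorem lemma1p2:
  fixes k R :: "'b::{idom,ring_char_0} set" and D :: "'b \<Rightarrow> 'b"
  assumes k_ac: "alg_closed_subfield k"
    and kR: "k \<subseteq> R"
    and R_fg: "fin_gen_algebra k R"
    and B_fg: "fin_gen_algebra k (UNIV :: 'b set)"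
    and gen_fibers: "\<exists>g\<in>R. g \<noteq> 0 \<and> (\<forall>m. maximal_ideal_of R m \<and> g \<notin> m \<longrightarrow> fiber_integral m)"
    and D_der: "is_derivation D"
    and D_Rtriv: "\<forall>r\<in>R. D r = 0"
    and D_fibers: "\<forall>m. maximal_ideal_of R m \<longrightarrow> fiber_LND D m"
  shows "\<exists>k0 B0 R0. fin_gen_field_over_Q k0 \<and> k0 \<subseteq> k
           \<and> fin_gen_algebra k0 B0 \<and> fin_gen_algebra k0 R0 \<and> R0 \<subseteq> B0
           \<and> base_change k0 B0 k UNIV \<and> base_change k0 R0 k R
           \<and> D ` B0 \<subseteq> B0 \<and> (\<forall>r\<in>R0. D r = 0)
           \<and> (locally_nilpotent_on B0 D \<longleftrightarrow> locally_nilpotent_on UNIV D)"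
proof -
  have k: "is_subfield k" using k_ac unfolding alg_closed_subfield_def by blast
  have ksr: "is_subring k" using k unfolding is_subfield_def by blast
  obtain S where S: "finite S" "UNIV = ring_closure (k \<union> S)" using B_fg unfolding fin_gen_algebra_def by blast
  obtain H where H: "finite H" "R = ring_closure (k \<union> H)" using R_fg unfolding fin_gen_algebra_def by blast
  obtain G where G: "set G = S" using finite_list[OF S(1)] by blast
  interpret descent k G by unfold_locales (rule k)
  have univ: "UNIV = ring_closure (k \<union> set G)" using S G by simp
  have Uspan: "UNIV \<subseteq> lspan k Stdv"
  proof -
    have "UNIV \<subseteq> lspan k (mnm G ` {\<alpha>. length \<alpha> = length G})" using rc_span[OF ksr, of G] univ by simp
    also have "\<dots> \<subseteq> lspan k Stdv" by (rule lspan_trans[OF kc mono_in_Stdv_span])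
    finally show ?thesis .
  qed
  obtain C where C: "finite C" "C \<subseteq> k"
    "\<forall>F. mclosed F \<and> 1 \<in> F \<and> C \<subseteq> F \<longrightarrow> (\<forall>\<delta>. length \<delta> = length G \<longrightarrow> mnm G \<delta> \<in> lspan F Stdv)"
    using reduction by (elim exE conjE) (rule that)
  define E where "E = D ` set G \<union> H"
  have finE: "finite E" unfolding E_def using H(1) by simp
  have "\<forall>x\<in>E. \<exists>Cx. finite Cx \<and> Cx \<subseteq> k \<and> x \<in> lspan Cx Stdv"
  proof
    fix x assume "x \<in> E"
    have "x \<in> lspan k Stdv" using Uspan by blast
    then show "\<exists>Cx. finite Cx \<and> Cx \<subseteq> k \<and> x \<in> lspan Cx Stdv" by (rule lspan_finite_coeffs)
  qed
  then obtain Cf where Cf: "\<forall>x\<in>E. finite (Cf x) \<and> Cf x \<subseteq> k \<and> x \<in> lspan (Cf x) Stdv"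
    by (rule bchoice[THEN exE])
  define C2 where "C2 = (\<Union>x\<in>E. Cf x)"
  have finC2: "finite C2" unfolding C2_def using finE Cf by blast
  have C2k: "C2 \<subseteq> k" unfolding C2_def using Cf by blast
  define k0 where "k0 = field_closure (C \<union> C2)"
  have k0k: "k0 \<subseteq> k" unfolding k0_def using fc_sub[OF k] C(2) C2k by blast
  have k0f: "is_subfield k0" unfolding k0_def using fc_subfield[OF k] C(2) C2k by blast
  have k0sr: "is_subring k0" using k0f unfolding is_subfield_def by blast
  have k0mc: "mclosed k0" by (rule subring_mclosed[OF k0sr])
  have k01: "1 \<in> k0" using k0sr unfolding is_subring_def by blast
  have Ck0: "C \<subseteq> k0" "C2 \<subseteq> k0" unfolding k0_def by (auto intro: fc_base)
  define B0 where "B0 = ring_closure (k0 \<union> set G)"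
  define R0 where "R0 = ring_closure (k0 \<union> H)"
  have B0sr: "is_subring B0" unfolding B0_def by (rule rc_subring)
  have B0span: "B0 \<subseteq> lspan k0 Stdv"
  proof -
    have "B0 \<subseteq> lspan k0 (mnm G ` {\<alpha>. length \<alpha> = length G})" unfolding B0_def by (rule rc_span[OF k0sr])
    also have "\<dots> \<subseteq> lspan k0 Stdv"
    proof (rule lspan_trans[OF k0mc])
      show "mnm G ` {\<alpha>. length \<alpha> = length G} \<subseteq> lspan k0 Stdv" using C(3) k0mc k01 Ck0 by blast
    qed
    finally show ?thesis .
  qed
  have spanB0: "lspan k0 Stdv \<subseteq> B0" unfolding B0_def by (rule span_in_rc) (auto simp: Stdv_def)
  have EB0: "E \<subseteq> B0"
  proof
    fix x assume x: "x \<in> E"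
    then have "Cf x \<subseteq> k0" using Ck0(2) unfolding C2_def by blast
    then have "lspan (Cf x) Stdv \<subseteq> lspan k0 Stdv" by (rule lspan_mono) simp
    then show "x \<in> B0" using Cf x spanB0 by blast
  qed
  have GB0: "set G \<subseteq> B0" unfolding B0_def by (auto intro: rc_base)
  have k0B0: "k0 \<subseteq> B0" unfolding B0_def by (auto intro: rc_base)
  have R0B0: "R0 \<subseteq> B0" unfolding R0_def by (rule rc_least[OF B0sr]) (use EB0 k0B0 E_def in blast)
  have Rsr: "is_subring R" unfolding H(2) by (rule rc_subring)
  have HR: "H \<subseteq> R" unfolding H(2) by (auto intro: rc_base)
  have R0R: "R0 \<subseteq> R" unfolding R0_def by (rule rc_least[OF Rsr]) (use k0k kR HR in blast)
  have fgq: "fin_gen_field_over_Q k0" unfolding fin_gen_field_over_Q_def using k0f k0_def C(1) finC2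
    by blast
  have fgB0: "fin_gen_algebra k0 B0" unfolding fin_gen_algebra_def B0_def by blast
  have fgR0: "fin_gen_algebra k0 R0" unfolding fin_gen_algebra_def R0_def using H(1) by blast
  have ldB0: "lin_disjoint k0 B0 k"
    by (rule lin_disj_generic[OF k0f ksr k0k B0span]) (use Stdv_indep in blast)
  have bcB: "base_change k0 B0 k UNIV"
    unfolding base_change_def
  proof (intro conjI)
    show "UNIV = ring_closure (B0 \<union> k)"
      using univ rc_mono[of "k \<union> set G" "B0 \<union> k"] GB0 by blast
  qed (use k0B0 k0k ldB0 in auto)
  have bcR: "base_change k0 R0 k R"
    unfolding base_change_def
  proof (intro conjI)
    show "k0 \<subseteq> R0" unfolding R0_def by (auto intro: rc_base)
    show "lin_disjoint k0 R0 k" using ldB0 R0B0 unfolding lin_disjoint_def by blast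
    have "R \<subseteq> ring_closure (R0 \<union> k)"
    proof -
      have "H \<subseteq> R0" unfolding R0_def by (auto intro: rc_base)
      then show ?thesis unfolding H(2) by (intro rc_mono) blast
    qed
    moreover have "ring_closure (R0 \<union> k) \<subseteq> R" by (rule rc_least[OF Rsr]) (use R0R kR in blast)
    ultimately show "R = ring_closure (R0 \<union> k)" by blast
  qed (use k0k in auto)
  have DB0: "D ` B0 \<subseteq> B0"
  proof
    fix y assume "y \<in> D ` B0"
    then obtain x where x: "x \<in> B0" "y = D x" by blast
    have "D x \<in> B0" using x(1) unfolding B0_def
    proof (induction rule: ring_closure.induct)
      case (rc_base x)
      show ?case
      proof (cases "x \<in> k0")
        case True
        then have "D x = 0" using k0k kR D_Rtriv by blast
        then show ?thesis using subring_zero[OF B0sr] B0_def by simp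
      next
        case False
        then have "D x \<in> E" using rc_base unfolding E_def by blast
        then show ?thesis using EB0 B0_def by blast
      qed
    next
      case rc_one then show ?case using der_one[OF D_der] subring_zero[OF B0sr] B0_def by simp
    next
      case (rc_neg x) then show ?case using der_neg[OF D_der] B0sr B0_def unfolding is_subring_def by simp
    next
      case (rc_add x y) then show ?case using D_der B0sr B0_def unfolding is_subring_def is_derivation_def by simp
    next
      case (rc_mult x y)
      have "D (x * y) = x * D y + D x * y" using D_der unfolding is_derivation_def by blast
      then show ?case using rc_mult B0sr B0_def unfolding is_subring_def by simp
    qed
    then show "y \<in> B0" using x by simp
  qed
  have DR0: "\<forall>r\<in>R0. D r = 0" using R0R D_Rtriv by blast
  have lnd: "locally_nilpotent_on B0 D \<longleftrightarrow> locally_nilpotent_on UNIV D"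
  proof
    assume "locally_nilpotent_on B0 D"
    then have "locally_nilpotent_on (ring_closure (B0 \<union> k)) D"
      using lnd_extend[OF D_der] kR D_Rtriv by blast
    moreover have "ring_closure (B0 \<union> k) = UNIV" using bcB unfolding base_change_def by simp
    ultimately show "locally_nilpotent_on UNIV D" by simp
  next
    assume "locally_nilpotent_on UNIV D"
    then show "locally_nilpotent_on B0 D" unfolding locally_nilpotent_on_def by blast
  qed
  show ?thesis
    using fgq k0k fgB0 fgR0 R0B0 bcB bcR DB0 DR0 lnd by blast
qed


end
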